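(* Let $\mathbb{A}$ be a finite non-empty set, $\mu$ the Bernoulli measure on $\mathbb{A}^\omega$, and $\varphi:\mathbb{A}^+\to C$ any finite coloring. Then for $\mu$-almost every $x\in\mathbb{A}^\omega$ there exists $y\in\Omega(x)$ which admits a $\varphi$-ultra monochromatic factorization.
   Context: The Bernoulli measure $\mu$ on $\mathbb{A}^\omega$ (product topology, $\mathbb{A}$ discrete) is the unique measure with $\mu([a_0,\dots,a_n])=d^{-(n+1)}$, $d=\mathrm{card}(\mathbb{A})$, where $[a_0,\dots,a_n]=\{x: x_i=a_i,\ 0\le i\le n\}$. $\mathrm{Fact}(x)$ is the set of non-empty finite factors of $x$, and $\Omega(x)=\{y\in\mathbb{A}^\omega:\mathrm{Fact}(y)\subseteq\mathrm{Fact}(x)\}$. A factorization $y=V_0V_1V_2\cdots$ with all $V_i\in\mathbb{A}^+$ is $\varphi$-ultra monochromatic if there is $c\in C$ such that for all $k\ge1$, all $0\le n_1<\cdots<n_k$ and all permutations $\sigma$ of $\{1,\dots,k\}$, $\varphi(V_{n_{\sigma(1)}}\cdots V_{n_{\sigma(k)}})=c$. *)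

theory Defs
  imports "HOL-Probability.Probability" "HOL-Combinatorics.Permutations"
begin

text \<open>Infinite words over the alphabet 'a are functions nat => 'a; finite words are lists.
  The alphabet is the (finite, nonempty) type 'a.\<close>

text \<open>Bernoulli measure: the product of uniform measures on the alphabet; it assigns
  measure d^-(n+1) to each cylinder [a_0,...,a_n].\<close>
definition bernoulli_measure :: "(nat \<Rightarrow> 'a::finite) measure" where
  "bernoulli_measure = PiM UNIV (\<lambda>_. uniform_count_measure (UNIV :: 'a set))"

definition Fact :: "(nat \<Rightarrow> 'a) \<Rightarrow> 'a list set" where
  "Fact x = {w. w \<noteq> [] \<and> (\<exists>i. w = map x [i..<i + length w])}"

definition Omega :: "(nat \<Rightarrow> 'a) \<Rightarrow> (nat \<Rightarrow> 'a) set" where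
  "Omega x = {y. Fact y \<subseteq> Fact x}"

text \<open>y = V 0 V 1 V 2 ... with all V n non-empty.\<close>
definition is_factorization :: "(nat \<Rightarrow> 'a) \<Rightarrow> (nat \<Rightarrow> 'a list) \<Rightarrow> bool" where
  "is_factorization y V \<longleftrightarrow>
     (\<forall>n. V n \<noteq> []) \<and>
     (\<forall>n. map y [(\<Sum>k<n. length (V k))..<(\<Sum>k<n. length (V k)) + length (V n)] = V n)"

definition ultra_monochromatic :: "('a list \<Rightarrow> 'c) \<Rightarrow> 'c set \<Rightarrow> (nat \<Rightarrow> 'a list) \<Rightarrow> bool" where
  "ultra_monochromatic \<phi> C V \<longleftrightarrow>
     (\<exists>c\<in>C. \<forall>k::nat. k \<ge> 1 \<longrightarrow>
        (\<forall>n::nat \<Rightarrow> nat. strict_mono_on {1..k} n \<longrightarrow>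
          (\<forall>\<sigma>. \<sigma> permutes {1..k} \<longrightarrow>
             \<phi> (concat (map (\<lambda>i. V (n (\<sigma> i))) [1..<k+1])) = c)))"

end

theory Submission
  imports Defs
begin


definition sfilter :: "nat set set \<Rightarrow> bool" where
 "sfilter F \<longleftrightarrow> UNIV \<in> F \<and> (\<forall>A B. A \<in> F \<longrightarrow> A \<subseteq> B \<longrightarrow> B \<in> F) \<and> (\<forall>A B. A\<in>F \<longrightarrow> B\<in>F \<longrightarrow> A\<inter>B \<in> F) \<and> {} \<notin> F"
definition uf :: "nat set set \<Rightarrow> bool" where "uf U \<longleftrightarrow> sfilter U \<and> (\<forall>A. A \<in> U \<or> -A \<in> U)"
definition shft :: "nat set \<Rightarrow> nat \<Rightarrow> nat set" where "shft A n = {m. m+n \<in> A}"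
definition hpi :: "nat set set \<Rightarrow> nat set \<Rightarrow> nat set" where "hpi p A = {n. shft A n \<in> p}"
definition splus :: "nat set set \<Rightarrow> nat set set \<Rightarrow> nat set set" where "splus p q = {A. hpi q A \<in> p}"
definition cof :: "nat set set" where "cof = {A. finite (-A)}"
definition good :: "nat set set \<Rightarrow> bool" where
  "good F \<longleftrightarrow> sfilter F \<and> cof \<subseteq> F \<and> (\<forall>p q. uf p \<longrightarrow> uf q \<longrightarrow> F \<subseteq> p \<longrightarrow> F \<subseteq> q \<longrightarrow> F \<subseteq> splus p q)"

lemma sfilterD:
  assumes "sfilter F"
  shows "UNIV \<in> F" "A \<in> F \<Longrightarrow> A \<subseteq> B \<Longrightarrow> B \<in> F" "A\<in>F \<Longrightarrow> B\<in>F \<Longrightarrow> A\<inter>B \<in> F" "{} \<notin> F"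
  using assms unfolding sfilter_def by blast+

lemma uf_sfilter: "uf U \<Longrightarrow> sfilter U" by (simp add: uf_def)

lemma uf_compl: "uf U \<Longrightarrow> (-A \<in> U) \<longleftrightarrow> A \<notin> U"
proof -
  assume u: "uf U"
  then have s: "sfilter U" by (simp add: uf_def)
  have "\<not> (A \<in> U \<and> -A \<in> U)"
  proof
    assume "A \<in> U \<and> -A \<in> U"
    then have "A \<inter> -A \<in> U" using sfilterD(3)[OF s] by blast
    then show False using sfilterD(4)[OF s] by simp
  qed
  moreover have "A \<in> U \<or> -A \<in> U" using u by (simp add: uf_def)
  ultimately show ?thesis by blast
qed

lemma uf_eq: assumes "uf U" "uf V" "U \<subseteq> V" shows "U = V"
proof
  show "V \<subseteq> U"
  proof
    fix A assume "A \<in> V"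
    show "A \<in> U"
    proof (rule ccontr)
      assume "A \<notin> U"
      then have "-A \<in> U" using uf_compl[OF assms(1)] by blast
      then have "-A \<in> V" using assms(3) by blast
      then show False using \<open>A \<in> V\<close> uf_compl[OF assms(2)] by blast
    qed
  qed
qed (rule assms(3))

lemma uf_lemma: assumes "sfilter F" shows "\<exists>U. uf U \<and> F \<subseteq> U"
proof -
  let ?A = "{G. sfilter G \<and> F \<subseteq> G}"
  have "\<forall>C\<in>chains ?A. \<exists>U\<in>?A. \<forall>X\<in>C. X \<subseteq> U"
  proof
    fix C assume C: "C \<in> chains ?A"
    show "\<exists>U\<in>?A. \<forall>X\<in>C. X \<subseteq> U"
    proof (cases "C = {}")
      case True then show ?thesis using assms by auto
    next
      case False
      have CA: "C \<subseteq> ?A" using C chainsD2 by blast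
      have "sfilter (\<Union>C)"
        unfolding sfilter_def
      proof (intro conjI allI impI)
        show "UNIV \<in> \<Union>C" using False CA sfilterD(1) by blast
        show "B \<in> \<Union>C" if "A \<in> \<Union>C" "A \<subseteq> B" for A B using that CA sfilterD(2) by blast
        show "A \<inter> B \<in> \<Union>C" if ab: "A \<in> \<Union>C" "B \<in> \<Union>C" for A B
        proof -
          obtain X Y where X: "X \<in> C" "A \<in> X" and Y: "Y \<in> C" "B \<in> Y" using ab by blast
          from chainsD[OF C X(1) Y(1)] show ?thesis
            using X Y CA sfilterD(3) by blast
        qed
        show "{} \<notin> \<Union>C" using CA sfilterD(4) by blast
      qed
      then show ?thesis using False CA by blast
    qed
  qed
  from Zorn_Lemma2[OF this] obtain U where U: "U \<in> ?A" and max: "\<forall>X\<in>?A. U \<subseteq> X \<longrightarrow> X = U" by blast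
  have sU: "sfilter U" using U by blast
  have "\<forall>A. A \<in> U \<or> -A \<in> U"
  proof (intro allI)
    fix A
    show "A \<in> U \<or> -A \<in> U"
    proof (cases "\<exists>u\<in>U. u \<inter> A = {}")
      case True
      then obtain u where "u \<in> U" "u \<subseteq> -A" by blast
      then show ?thesis using sfilterD(2)[OF sU] by blast
    next
      case False
      let ?G = "{B. \<exists>u\<in>U. u \<inter> A \<subseteq> B}"
      have sG: "sfilter ?G"
        unfolding sfilter_def
      proof (intro conjI allI impI)
        show "UNIV \<in> ?G" using sfilterD(1)[OF sU] by blast
        show "B' \<in> ?G" if "B \<in> ?G" "B \<subseteq> B'" for B B' using that by blast
        show "B \<inter> B' \<in> ?G" if bb: "B \<in> ?G" "B' \<in> ?G" for B B'
        proof -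
          obtain u u' where "u \<in> U" "u \<inter> A \<subseteq> B" "u' \<in> U" "u' \<inter> A \<subseteq> B'" using bb by blast
          then show ?thesis using sfilterD(3)[OF sU, of u u'] by (intro CollectI bexI[of _ "u \<inter> u'"]) auto
        qed
        show "{} \<notin> ?G" using False by blast
      qed
      have "U \<subseteq> ?G" by blast
      then have "?G = U" using max sG U by blast
      moreover have "A \<in> ?G" using sfilterD(1)[OF sU] by blast
      ultimately show ?thesis by blast
    qed
  qed
  then show ?thesis using U by (auto simp: uf_def)
qed

lemma uf_avoid: assumes "sfilter F" "A \<notin> F" shows "\<exists>U. uf U \<and> F \<subseteq> U \<and> A \<notin> U"
proof -
  let ?G = "{B. \<exists>f\<in>F. f \<inter> -A \<subseteq> B}"
  have sG: "sfilter ?G"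
    unfolding sfilter_def
  proof (intro conjI allI impI)
    show "UNIV \<in> ?G" using sfilterD(1)[OF assms(1)] by blast
    show "B' \<in> ?G" if "B \<in> ?G" "B \<subseteq> B'" for B B' using that by blast
    show "B \<inter> B' \<in> ?G" if bb: "B \<in> ?G" "B' \<in> ?G" for B B'
    proof -
      obtain u u' where "u \<in> F" "u \<inter> -A \<subseteq> B" "u' \<in> F" "u' \<inter> -A \<subseteq> B'" using bb by blast
      then show ?thesis using sfilterD(3)[OF assms(1), of u u'] by (intro CollectI bexI[of _ "u \<inter> u'"]) auto
    qed
    show "{} \<notin> ?G"
    proof
      assume "{} \<in> ?G"
      then obtain f where "f \<in> F" "f \<subseteq> A" by blast
      then show False using assms sfilterD(2) by blast
    qed
  qed
  obtain U where U: "uf U" "?G \<subseteq> U" using uf_lemma[OF sG] by blast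
  have "F \<subseteq> ?G" by blast
  moreover have "-A \<in> ?G" using sfilterD(1)[OF assms(1)] by blast
  ultimately show ?thesis using U uf_compl[OF U(1)] by blast
qed

lemma shft_shft: "shft (shft A n) m = shft A (m+n)"
  by (auto simp: shft_def add.assoc)

lemma hpi_UNIV: "uf p \<Longrightarrow> hpi p UNIV = UNIV"
  using sfilterD(1)[OF uf_sfilter] by (auto simp: hpi_def shft_def)

lemma hpi_empty: "uf p \<Longrightarrow> hpi p {} = {}"
  using sfilterD(4)[OF uf_sfilter] by (auto simp: hpi_def shft_def)

lemma hpi_mono: "uf p \<Longrightarrow> A \<subseteq> B \<Longrightarrow> hpi p A \<subseteq> hpi p B"
proof
  fix n assume u: "uf p" and AB: "A \<subseteq> B" and "n \<in> hpi p A"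
  then have "shft A n \<in> p" by (simp add: hpi_def)
  moreover have "shft A n \<subseteq> shft B n" using AB by (auto simp: shft_def)
  ultimately show "n \<in> hpi p B" using sfilterD(2)[OF uf_sfilter[OF u]] by (auto simp: hpi_def)
qed

lemma hpi_Int: "uf p \<Longrightarrow> hpi p (A \<inter> B) = hpi p A \<inter> hpi p B"
proof -
  assume u: "uf p"
  have e: "shft (A \<inter> B) n = shft A n \<inter> shft B n" for n by (auto simp: shft_def)
  have "shft A n \<inter> shft B n \<in> p \<longleftrightarrow> shft A n \<in> p \<and> shft B n \<in> p" for n
    using sfilterD(2,3)[OF uf_sfilter[OF u]] by (meson Int_lower1 Int_lower2)
  then show ?thesis unfolding hpi_def e by auto
qed

lemma hpi_compl: "uf p \<Longrightarrow> hpi p (-A) = - hpi p A"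
proof -
  assume u: "uf p"
  have e: "shft (-A) n = - shft A n" for n by (auto simp: shft_def)
  have c: "(- shft A n \<in> p) = (shft A n \<notin> p)" for n by (rule uf_compl[OF u])
  show ?thesis by (rule set_eqI) (simp add: hpi_def e c)
qed

lemma uf_splus: assumes "uf p" "uf q" shows "uf (splus p q)"
proof -
  have sp: "sfilter p" using assms uf_sfilter by blast
  show ?thesis
  unfolding uf_def sfilter_def splus_def
  proof (intro conjI allI impI)
    show "UNIV \<in> {A. hpi q A \<in> p}" using hpi_UNIV[OF assms(2)] sfilterD(1)[OF sp] by simp
    show "B \<in> {A. hpi q A \<in> p}" if "A \<in> {A. hpi q A \<in> p}" "A \<subseteq> B" for A B
      using that hpi_mono[OF assms(2) that(2)] sfilterD(2)[OF sp, of "hpi q A" "hpi q B"] by simp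
    show "A \<inter> B \<in> {A. hpi q A \<in> p}" if "A \<in> {A. hpi q A \<in> p}" "B \<in> {A. hpi q A \<in> p}" for A B
      using that hpi_Int[OF assms(2)] sfilterD(3)[OF sp] by simp
    show "{} \<notin> {A. hpi q A \<in> p}" using hpi_empty[OF assms(2)] sfilterD(4)[OF sp] by simp
    show "A \<in> {A. hpi q A \<in> p} \<or> - A \<in> {A. hpi q A \<in> p}" for A
    proof -
      have "hpi q A \<in> p \<or> - hpi q A \<in> p" using assms(1) by (simp add: uf_def)
      then show ?thesis by (simp add: hpi_compl[OF assms(2)])
    qed
  qed
qed

lemma splus_assoc: "splus (splus p q) r = splus p (splus q r)"
proof -
  have "hpi q (hpi r A) = hpi (splus q r) A" for A
    by (auto simp: hpi_def splus_def shft_shft) (auto simp: shft_def add.commute)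
  then show ?thesis by (auto simp: splus_def)
qed

lemma cof_shft: "A \<in> cof \<Longrightarrow> shft A n \<in> cof"
proof -
  assume "A \<in> cof"
  then have "finite (-A)" by (simp add: cof_def)
  moreover have "-(shft A n) = (\<lambda>m. m + n) -` (-A)" by (auto simp: shft_def)
  ultimately show ?thesis by (simp add: cof_def finite_vimageI inj_on_def)
qed

lemma cof_splus: assumes "uf p" "uf q" "cof \<subseteq> p" "cof \<subseteq> q" shows "cof \<subseteq> splus p q"
proof
  fix A assume "A \<in> cof"
  then have "hpi q A = UNIV" using cof_shft assms(4) by (auto simp: hpi_def)
  then show "A \<in> splus p q" using sfilterD(1)[OF uf_sfilter[OF assms(1)]] by (simp add: splus_def)
qed

lemma cof_sfilter: "sfilter cof"
  unfolding sfilter_def cof_def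
  by (auto intro: finite_subset)

lemma good_cof: "good cof"
  unfolding good_def using cof_sfilter cof_splus by blast

lemma good_sfilter: "good F \<Longrightarrow> sfilter F" by (simp add: good_def)

lemma genH_sfilter:
  assumes sF: "sfilter F" and p: "uf p" and r: "uf r" and Gr: "{A. hpi p A \<in> F} \<subseteq> r"
  shows "sfilter {B. \<exists>f\<in>F. \<exists>A\<in>r. f \<inter> hpi p A \<subseteq> B}" (is "sfilter ?H")
  unfolding sfilter_def
proof (intro conjI allI impI)
  have sr: "sfilter r" using r uf_sfilter by blast
  show "UNIV \<in> ?H" using sfilterD(1)[OF sF] sfilterD(1)[OF sr] by blast
  show "B' \<in> ?H" if "B \<in> ?H" "B \<subseteq> B'" for B B' using that by blast
  show "B \<inter> B' \<in> ?H" if bb: "B \<in> ?H" "B' \<in> ?H" for B B'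
  proof -
    obtain f A f' A' where "f \<in> F" "A \<in> r" "f \<inter> hpi p A \<subseteq> B" "f' \<in> F" "A' \<in> r" "f' \<inter> hpi p A' \<subseteq> B'"
      using bb by blast
    moreover have "(f \<inter> f') \<inter> hpi p (A \<inter> A') = (f \<inter> hpi p A) \<inter> (f' \<inter> hpi p A')"
      using hpi_Int[OF p] by auto
    ultimately show ?thesis using sfilterD(3)[OF sF, of f f'] sfilterD(3)[OF sr, of A A']
      by (intro CollectI bexI[of _ "f \<inter> f'"] bexI[of _ "A \<inter> A'"]) auto
  qed
  show "{} \<notin> ?H"
  proof
    assume "{} \<in> ?H"
    then obtain f A where fA: "f \<in> F" "A \<in> r" "f \<inter> hpi p A \<subseteq> {}" by blast
    then have "f \<subseteq> hpi p (-A)" using hpi_compl[OF p] by auto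
    then have "hpi p (-A) \<in> F" using sfilterD(2)[OF sF] fA by blast
    then have "-A \<in> r" using Gr by blast
    then show False using fA uf_compl[OF r] by blast
  qed
qed

lemma idempotent_exists: "\<exists>p. uf p \<and> cof \<subseteq> p \<and> (\<forall>A\<in>p. hpi p A \<in> p)"
proof -
  have "\<forall>C\<in>chains (Collect good). \<exists>U\<in>Collect good. \<forall>X\<in>C. X \<subseteq> U"
  proof
    fix C assume C: "C \<in> chains (Collect good)"
    show "\<exists>U\<in>Collect good. \<forall>X\<in>C. X \<subseteq> U"
    proof (cases "C = {}")
      case True then show ?thesis using good_cof by auto
    next
      case False
      have CA: "\<And>X. X \<in> C \<Longrightarrow> good X" using C chainsD2 by blast
      have CS: "\<And>X. X \<in> C \<Longrightarrow> sfilter X" using CA good_sfilter by blast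
      have "sfilter (\<Union>C)"
        unfolding sfilter_def
      proof (intro conjI allI impI)
        show "UNIV \<in> \<Union>C" using False CS sfilterD(1) by blast
        show "B \<in> \<Union>C" if "A \<in> \<Union>C" "A \<subseteq> B" for A B using that CS sfilterD(2) by blast
        show "A \<inter> B \<in> \<Union>C" if ab: "A \<in> \<Union>C" "B \<in> \<Union>C" for A B
        proof -
          obtain X Y where X: "X \<in> C" "A \<in> X" and Y: "Y \<in> C" "B \<in> Y" using ab by blast
          from chainsD[OF C X(1) Y(1)] show ?thesis
            using X Y CS sfilterD(3) by blast
        qed
        show "{} \<notin> \<Union>C" using CS sfilterD(4) by blast
      qed
      moreover have "cof \<subseteq> \<Union>C" using False CA by (auto simp: good_def)
      moreover have "\<Union>C \<subseteq> splus p q" if "uf p" "uf q" "\<Union>C \<subseteq> p" "\<Union>C \<subseteq> q" for p q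
      proof
        fix A assume "A \<in> \<Union>C"
        then obtain X where "X \<in> C" "A \<in> X" by blast
        then show "A \<in> splus p q" using CA[of X] that unfolding good_def by blast
      qed
      ultimately have "good (\<Union>C)" unfolding good_def by blast
      then show ?thesis by blast
    qed
  qed
  from Zorn_Lemma2[OF this] obtain F where gF: "good F" and max: "\<And>X. good X \<Longrightarrow> F \<subseteq> X \<Longrightarrow> X = F" by blast
  have sF: "sfilter F" and cF: "cof \<subseteq> F"
    and semi: "\<And>p q. uf p \<Longrightarrow> uf q \<Longrightarrow> F \<subseteq> p \<Longrightarrow> F \<subseteq> q \<Longrightarrow> F \<subseteq> splus p q"
    using gF by (auto simp: good_def)
  obtain p where p: "uf p" "F \<subseteq> p" using uf_lemma[OF sF] by blast
  define G where "G = {A. hpi p A \<in> F}"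
  have FG: "F \<subseteq> G"
  proof
    fix A assume A: "A \<in> F"
    show "A \<in> G"
    proof (rule ccontr)
      assume "A \<notin> G"
      then have "hpi p A \<notin> F" by (simp add: G_def)
      then obtain q where q: "uf q" "F \<subseteq> q" "hpi p A \<notin> q" using uf_avoid[OF sF] by blast
      have "A \<in> splus q p" using semi[OF q(1) p(1) q(2) p(2)] A by blast
      then show False using q(3) by (simp add: splus_def)
    qed
  qed
  have FH: "F \<subseteq> {B. \<exists>f\<in>F. \<exists>A\<in>r. f \<inter> hpi p A \<subseteq> B}" if "uf r" for r
  proof
    fix f assume "f \<in> F"
    moreover have "UNIV \<in> r" using sfilterD(1)[OF uf_sfilter[OF that]] .
    ultimately show "f \<in> {B. \<exists>f\<in>F. \<exists>A\<in>r. f \<inter> hpi p A \<subseteq> B}" using hpi_UNIV[OF p(1)] by blast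
  qed
  have rep: "\<exists>q. uf q \<and> F \<subseteq> q \<and> splus q p = r" if r: "uf r" "G \<subseteq> r" for r
  proof -
    let ?H = "{B. \<exists>f\<in>F. \<exists>A\<in>r. f \<inter> hpi p A \<subseteq> B}"
    have "sfilter ?H" using genH_sfilter[OF sF p(1) r(1)] r(2) by (simp add: G_def)
    then obtain q where q: "uf q" "?H \<subseteq> q" using uf_lemma by blast
    have "r \<subseteq> splus q p"
    proof
      fix A assume "A \<in> r"
      then have "hpi p A \<in> ?H" using sfilterD(1)[OF sF] by blast
      then show "A \<in> splus q p" using q by (auto simp: splus_def)
    qed
    then have "r = splus q p" using uf_eq[OF r(1) uf_splus[OF q(1) p(1)]] by blast
    moreover have "F \<subseteq> q" using FH[OF r(1)] q(2) by (rule subset_trans)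
    ultimately show ?thesis using q(1) by blast
  qed
  have "good G"
    unfolding good_def
  proof (intro conjI allI impI)
    show "sfilter G"
      unfolding sfilter_def G_def
    proof (intro conjI allI impI)
      show "UNIV \<in> {A. hpi p A \<in> F}" using hpi_UNIV[OF p(1)] sfilterD(1)[OF sF] by simp
      show "B \<in> {A. hpi p A \<in> F}" if "A \<in> {A. hpi p A \<in> F}" "A \<subseteq> B" for A B
        using that hpi_mono[OF p(1) that(2)] sfilterD(2)[OF sF, of "hpi p A" "hpi p B"] by simp
      show "A \<inter> B \<in> {A. hpi p A \<in> F}" if "A \<in> {A. hpi p A \<in> F}" "B \<in> {A. hpi p A \<in> F}" for A B
        using that hpi_Int[OF p(1)] sfilterD(3)[OF sF] by simp
      show "{} \<notin> {A. hpi p A \<in> F}" using hpi_empty[OF p(1)] sfilterD(4)[OF sF] by simp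
    qed
    show "cof \<subseteq> G"
    proof
      fix A assume "A \<in> cof"
      then have "hpi p A = UNIV" using cof_shft cF p(2) by (auto simp: hpi_def)
      then show "A \<in> G" using sfilterD(1)[OF sF] by (simp add: G_def)
    qed
    fix r s assume rs: "uf r" "uf s" "G \<subseteq> r" "G \<subseteq> s"
    obtain q1 where q1: "uf q1" "F \<subseteq> q1" "splus q1 p = r" using rep rs by blast
    obtain q2 where q2: "uf q2" "F \<subseteq> q2" "splus q2 p = s" using rep rs by blast
    define t where "t = splus (splus q1 p) q2"
    have ut: "uf t" unfolding t_def using uf_splus q1 q2 p by blast
    have "F \<subseteq> splus q1 p" using semi q1 p by blast
    then have Ft: "F \<subseteq> t" unfolding t_def using semi q1 q2 p uf_splus by blast
    have "splus r s = splus t p" unfolding t_def using q1(3) q2(3) splus_assoc by metis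
    then show "G \<subseteq> splus r s" using Ft by (auto simp: G_def splus_def)
  qed
  then have GF: "G = F" using max FG by blast
  have Gp: "G \<subseteq> p" using GF p(2) by simp
  define H where "H = {B. \<exists>f\<in>F. \<exists>A\<in>p. f \<inter> hpi p A \<subseteq> B}"
  have sH: "sfilter H" unfolding H_def using genH_sfilter[OF sF p(1) p(1)] Gp by (simp add: G_def)
  have FH2: "F \<subseteq> H" unfolding H_def using FH[OF p(1)] .
  have pt: "p \<subseteq> splus t p" if "uf t" "H \<subseteq> t" for t
  proof
    fix A assume "A \<in> p"
    then have "hpi p A \<in> H" unfolding H_def using sfilterD(1)[OF sF] by blast
    then show "A \<in> splus t p" using that by (auto simp: splus_def)
  qed
  have "good H"
    unfolding good_def
  proof (intro conjI allI impI)
    show "sfilter H" by (rule sH)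
    show "cof \<subseteq> H" using cF FH2 by blast
    fix t1 t2 assume ts: "uf t1" "uf t2" "H \<subseteq> t1" "H \<subseteq> t2"
    have F12: "F \<subseteq> splus t1 t2" using semi ts FH2 by blast
    have e2: "splus t2 p = p" using uf_eq[OF p(1) uf_splus[OF ts(2) p(1)]] pt ts by blast
    have s12: "sfilter (splus t1 t2)" using uf_splus ts uf_sfilter by blast
    show "H \<subseteq> splus t1 t2"
    proof
      fix B assume "B \<in> H"
      then obtain f A where fA: "f \<in> F" "A \<in> p" "f \<inter> hpi p A \<subseteq> B" unfolding H_def by blast
      have "A \<in> splus t1 (splus t2 p)" using e2 pt ts fA(2) by auto
      then have "A \<in> splus (splus t1 t2) p" using splus_assoc by metis
      then have "hpi p A \<in> splus t1 t2" by (simp add: splus_def)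
      then show "B \<in> splus t1 t2" using fA F12 sfilterD(2,3)[OF s12] by blast
    qed
  qed
  then have HF: "H = F" using max FH2 by blast
  have "\<forall>A\<in>p. hpi p A \<in> p"
  proof
    fix A assume "A \<in> p"
    then have "hpi p A \<in> H" unfolding H_def using sfilterD(1)[OF sF] by blast
    then show "hpi p A \<in> p" using HF p(2) by blast
  qed
  then show ?thesis using p cF by blast
qed


definition hstar :: "nat set set \<Rightarrow> nat set \<Rightarrow> nat set" where
  "hstar p A = A \<inter> hpi p A"

primrec hB :: "nat set set \<Rightarrow> nat set \<Rightarrow> nat \<Rightarrow> nat set" where
  "hB p A 0 = A"
| "hB p A (Suc k) = hstar p (hB p A k) \<inter> shft (hstar p (hB p A k)) (SOME x. x \<in> hstar p (hB p A k))"

definition hx :: "nat set set \<Rightarrow> nat set \<Rightarrow> nat \<Rightarrow> nat" where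
  "hx p A k = (SOME x. x \<in> hstar p (hB p A k))"

locale idem =
  fixes p :: "nat set set"
  assumes up: "uf p" and idem: "\<And>A. A \<in> p \<Longrightarrow> hpi p A \<in> p"
begin

lemma sp: "sfilter p" using up uf_sfilter by blast

lemma hstar_in: "A \<in> p \<Longrightarrow> hstar p A \<in> p"
  unfolding hstar_def using idem sfilterD(3)[OF sp] by blast

lemma hstar_shft: assumes "n \<in> hstar p A" shows "shft (hstar p A) n \<in> p"
proof -
  have e: "shft (hstar p A) n = shft A n \<inter> hpi p (shft A n)"
    by (auto simp: hstar_def shft_def hpi_def shft_shft add.assoc)
  have "shft A n \<in> p" using assms by (simp add: hstar_def hpi_def)
  then show ?thesis unfolding e using idem sfilterD(3)[OF sp] by blast
qed

lemma nonempty: "A \<in> p \<Longrightarrow> \<exists>x. x \<in> A"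
  using sfilterD(4)[OF sp] by (metis ex_in_conv)

lemma hB_in: assumes "A \<in> p" shows "hB p A k \<in> p \<and> hx p A k \<in> hstar p (hB p A k)"
proof (induction k)
  case 0
  have "hstar p A \<in> p" using hstar_in assms by blast
  then have "hx p A 0 \<in> hstar p (hB p A 0)" unfolding hx_def using nonempty by (metis hB.simps(1) someI_ex)
  then show ?case using assms by simp
next
  case (Suc k)
  let ?S = "hstar p (hB p A k)"
  have S: "?S \<in> p" using hstar_in Suc by blast
  have "shft ?S (hx p A k) \<in> p" using hstar_shft Suc by blast
  then have B: "hB p A (Suc k) \<in> p" using S sfilterD(3)[OF sp] by (simp add: hx_def)
  then have "hstar p (hB p A (Suc k)) \<in> p" using hstar_in by blast
  then have "hx p A (Suc k) \<in> hstar p (hB p A (Suc k))" unfolding hx_def using nonempty by (metis someI_ex)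
  then show ?case using B by blast
qed

lemma hB_Suc_sub: "hB p A (Suc k) \<subseteq> shft (hstar p (hB p A k)) (hx p A k)"
  by (simp add: hx_def)

lemma hB_dec: "k \<le> j \<Longrightarrow> hB p A j \<subseteq> hB p A k"
proof (induction j rule: dec_induct)
  case base then show ?case by simp
next
  case (step j)
  have "hB p A (Suc j) \<subseteq> hB p A j" by (auto simp: hstar_def)
  then show ?case using step by blast
qed

lemma hB_sum: assumes A: "A \<in> p"
  shows "finite I \<Longrightarrow> I \<noteq> {} \<Longrightarrow> \<forall>i\<in>I. k \<le> i \<Longrightarrow> sum (hx p A) I \<in> hB p A k"
proof (induction "card I" arbitrary: I k rule: less_induct)
  case less
  define m where "m = Min I"
  have mI: "m \<in> I" using less.prems m_def by simp
  have km: "k \<le> m" using less.prems mI by blast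
  have xm: "hx p A m \<in> hstar p (hB p A m)" using hB_in[OF A] by blast
  have sub: "hstar p (hB p A m) \<subseteq> hB p A k" using hB_dec[OF km] by (auto simp: hstar_def)
  show ?case
  proof (cases "I = {m}")
    case True then show ?thesis using xm sub by auto
  next
    case False
    let ?I = "I - {m}"
    have ne: "?I \<noteq> {}" using False mI by blast
    have fin: "finite ?I" using less.prems by simp
    have ge: "\<forall>i\<in>?I. Suc m \<le> i"
    proof
      fix i assume i: "i \<in> ?I"
      then have "m \<le> i" "i \<noteq> m" using Min_le[OF less.prems(1)] m_def by auto
      then show "Suc m \<le> i" by simp
    qed
    have "card ?I < card I" using card_Diff1_less[OF less.prems(1) mI] .
    then have "sum (hx p A) ?I \<in> hB p A (Suc m)" using less.hyps fin ne ge by blast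
    then have "sum (hx p A) ?I + hx p A m \<in> hstar p (hB p A m)" using hB_Suc_sub by (auto simp: shft_def)
    moreover have "sum (hx p A) I = hx p A m + sum (hx p A) ?I" using less.prems mI by (simp add: sum.remove)
    ultimately show ?thesis using sub by (simp add: add.commute subset_iff)
  qed
qed

end

lemma uf_finite_union: assumes "uf p" "finite C" shows "(\<Union>c\<in>C. B c) \<in> p \<Longrightarrow> \<exists>c\<in>C. B c \<in> p"
  using assms(2)
proof (induction C rule: finite_induct)
  case empty then show ?case using sfilterD(4)[OF uf_sfilter[OF assms(1)]] by simp
next
  case (insert a C)
  show ?case
  proof (cases "B a \<in> p")
    case True then show ?thesis by blast
  next
    case False
    then have "-B a \<in> p" using uf_compl[OF assms(1)] by blast
    then have "-B a \<inter> (\<Union>c\<in>insert a C. B c) \<in> p" using sfilterD(3)[OF uf_sfilter[OF assms(1)] _ insert.prems] by blast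
    moreover have "-B a \<inter> (\<Union>c\<in>insert a C. B c) \<subseteq> (\<Union>c\<in>C. B c)" by blast
    ultimately have "(\<Union>c\<in>C. B c) \<in> p" by (rule sfilterD(2)[OF uf_sfilter[OF assms(1)]])
    then show ?thesis using insert.IH by blast
  qed
qed

theorem hindman:
  fixes c :: "nat \<Rightarrow> 'c"
  assumes "finite C" "\<And>n. 1 \<le> n \<Longrightarrow> c n \<in> C"
  shows "\<exists>x::nat\<Rightarrow>nat. (\<forall>i. 1 \<le> x i) \<and> (\<exists>col\<in>C. \<forall>I. finite I \<longrightarrow> I \<noteq> {} \<longrightarrow> c (sum x I) = col)"
proof -
  obtain p where p: "uf p" "cof \<subseteq> p" "\<forall>A\<in>p. hpi p A \<in> p" using idempotent_exists by blast
  interpret idem p using p by unfold_locales auto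
  have "- {n. 1 \<le> n} \<subseteq> {0::nat}" by auto
  then have "{n. 1 \<le> n} \<in> cof" unfolding cof_def using finite_subset by blast
  then have "{n. 1 \<le> n} \<in> p" using p by blast
  moreover have "{n. 1 \<le> n} = (\<Union>col\<in>C. {n. 1 \<le> n \<and> c n = col})" using assms(2) by auto
  ultimately have "(\<Union>col\<in>C. {n. 1 \<le> n \<and> c n = col}) \<in> p" by simp
  then obtain col where col: "col \<in> C" "{n. 1 \<le> n \<and> c n = col} \<in> p"
    using uf_finite_union[OF p(1) assms(1), of "\<lambda>col. {n. 1 \<le> n \<and> c n = col}"] by blast
  define A where "A = {n. 1 \<le> n \<and> c n = col}"
  have A: "A \<in> p" using col A_def by simp
  have "\<forall>i. 1 \<le> hx p A i"
  proof
    fix i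
    have "hx p A i \<in> hB p A 0" using hB_in[OF A, of i] hB_dec[of 0 i A] by (auto simp: hstar_def)
    then show "1 \<le> hx p A i" by (simp add: A_def)
  qed
  moreover have "\<forall>I. finite I \<longrightarrow> I \<noteq> {} \<longrightarrow> c (sum (hx p A) I) = col"
  proof (intro allI impI)
    fix I :: "nat set" assume "finite I" "I \<noteq> {}"
    then have "sum (hx p A) I \<in> hB p A 0" using hB_sum[OF A, of I 0] by blast
    then show "c (sum (hx p A) I) = col" by (simp add: A_def)
  qed
  ultimately show ?thesis using col by blast
qed



lemma map_upt_replicate: "map x [s..<s+j] = replicate j a \<longleftrightarrow> (\<forall>i<j. x (s+i) = a)"
  by (auto simp: list_eq_iff_nth_eq)

lemma AE_block:
  fixes a :: "'a::finite" and j :: nat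
  shows "AE x in PiM UNIV (\<lambda>_. uniform_count_measure (UNIV::'a set)). \<exists>i. map x [i..<i+j] = replicate j a"
proof -
  define M where "M = uniform_count_measure (UNIV::'a set)"
  interpret M: prob_space M unfolding M_def by (rule prob_space_uniform_count_measure) auto
  interpret S: sequence_space M by unfold_locales
  have spS: "space S.S = UNIV" by (simp add: space_PiM M_def space_uniform_count_measure)
  define blk where "blk x t \<longleftrightarrow> (\<exists>i<j. x (j*t+i) \<noteq> a)" for x :: "nat \<Rightarrow> 'a" and t
  define N where "N T = {x \<in> space S.S. \<forall>t<T. blk x t}" for T
  define Z where "Z = {x \<in> space S.S. \<forall>t. blk x t}"
  have meas: "N T \<in> sets S.S" for T
    unfolding N_def blk_def M_def by measurable
  have measZ: "Z \<in> sets S.S"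
    unfolding Z_def blk_def M_def by measurable
  let ?f = "\<lambda>(\<omega>, \<omega>'). comb_seq j \<omega> \<omega>'"
  have pre: "?f -` N (Suc T) \<inter> space (S.S \<Otimes>\<^sub>M S.S) = N 1 \<times> N T" for T
  proof -
    have b0: "blk (comb_seq j w w') 0 \<longleftrightarrow> blk w 0" for w w'
      unfolding blk_def by (auto simp: comb_seq_less)
    have bS: "blk (comb_seq j w w') (Suc t) \<longleftrightarrow> blk w' t" for w w' t
    proof -
      have "j * Suc t + i = (j*t+i) + j" for i by simp
      then show ?thesis unfolding blk_def by (simp only: comb_seq_add)
    qed
    show ?thesis
      by (auto simp: N_def spS space_pair_measure less_Suc_eq_0_disj b0 bS)
  qed
  have step: "emeasure S.S (N (Suc T)) = emeasure S.S (N 1) * emeasure S.S (N T)" for T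
  proof -
    have "emeasure S.S (N (Suc T)) = emeasure (distr (S.S \<Otimes>\<^sub>M S.S) S.S ?f) (N (Suc T))"
      using S.PiM_comb_seq[of j] by simp
    also have "\<dots> = emeasure (S.S \<Otimes>\<^sub>M S.S) (?f -` N (Suc T) \<inter> space (S.S \<Otimes>\<^sub>M S.S))"
      by (rule emeasure_distr[OF measurable_comb_seq meas])
    also have "\<dots> = emeasure S.S (N 1) * emeasure S.S (N T)"
      unfolding pre by (rule S.emeasure_pair_measure_Times[OF meas meas])
    finally show ?thesis .
  qed
  define q where "q = measure S.S (N 1)"
  have NT: "emeasure S.S (N T) = ennreal (q ^ T)" for T
  proof (induction T)
    case 0
    have "N 0 = space S.S" by (simp add: N_def)
    then show ?case using S.emeasure_space_1 by simp
  next
    case (Suc T)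
    then show ?case using step[of T] by (simp add: q_def S.emeasure_eq_measure ennreal_mult')
  qed
  define B where "B = {x \<in> space S.S. \<forall>i\<in>{..<j}. x i \<in> {a}}"
  have "emeasure S.S B = (\<Prod>i\<in>{..<j}. emeasure M {a})"
    unfolding B_def by (rule S.emeasure_PiM_Collect) (auto simp: M_def)
  also have "\<dots> = ennreal ((1 / real CARD('a)) ^ j)"
    by (simp add: M_def emeasure_uniform_count_measure ennreal_power divide_ennreal)
  finally have mB: "measure S.S B = (1 / real CARD('a)) ^ j"
    by (simp add: S.emeasure_eq_measure)
  have Bs: "B \<in> sets S.S" unfolding B_def M_def by measurable
  have "N 1 = space S.S - B" by (auto simp: N_def B_def blk_def)
  then have q: "q = 1 - (1 / real CARD('a)) ^ j"
    unfolding q_def using S.prob_compl[OF Bs] mB by simp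
  have q0: "0 \<le> q" "q < 1"
    using q by (auto simp: power_le_one)
  have "measure S.S Z \<le> q ^ T" for T
  proof -
    have "Z \<subseteq> N T" by (auto simp: Z_def N_def)
    then have "measure S.S Z \<le> measure S.S (N T)" using S.finite_measure_mono meas by blast
    also have "\<dots> = q ^ T" using NT[of T] q0 by (simp add: S.emeasure_eq_measure)
    finally show ?thesis .
  qed
  moreover have "(\<lambda>T. q ^ T) \<longlonglongrightarrow> 0" using q0 by (intro LIMSEQ_power_zero) simp
  ultimately have "measure S.S Z \<le> 0" by (intro LIMSEQ_le_const[of "\<lambda>T. q ^ T"]) auto
  then have "emeasure S.S Z = 0" using measure_nonneg[of S.S Z] by (simp add: S.emeasure_eq_measure)
  then have Znull: "Z \<in> null_sets S.S" using measZ by blast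
  show ?thesis
  proof (rule AE_I'[OF _ ])
    show "Z \<in> null_sets (PiM UNIV (\<lambda>_. uniform_count_measure (UNIV::'a set)))" using Znull M_def by simp
    show "{x \<in> space (PiM UNIV (\<lambda>_. uniform_count_measure (UNIV::'a set))). \<not> (\<exists>i. map x [i..<i+j] = replicate j a)} \<subseteq> Z"
      using map_upt_replicate unfolding Z_def blk_def M_def by fastforce
  qed
qed


lemma concat_rep: "concat (map (\<lambda>i. replicate (f i) a) xs) = replicate (sum_list (map f xs)) a"
  by (induction xs) (auto simp: replicate_add)

theorem corollary2p7:
  fixes \<phi> :: "'a::finite list \<Rightarrow> 'c" and C :: "'c set"
  assumes "finite C"
    and "\<forall>w. w \<noteq> [] \<longrightarrow> \<phi> w \<in> C"
  shows "AE x in bernoulli_measure.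
           \<exists>y\<in>Omega x. \<exists>V. is_factorization y V \<and> ultra_monochromatic \<phi> C V"
proof -
  define a :: 'a where "a = undefined"
  define c where "c n = \<phi> (replicate n a)" for n
  have cC: "c n \<in> C" if "1 \<le> n" for n
  proof -
    have "replicate n a \<noteq> []" using that by simp
    then show ?thesis using assms(2) unfolding c_def by blast
  qed
  have "\<exists>x::nat\<Rightarrow>nat. (\<forall>i. 1 \<le> x i) \<and> (\<exists>col\<in>C. \<forall>I. finite I \<longrightarrow> I \<noteq> {} \<longrightarrow> c (sum x I) = col)"
    using hindman[OF assms(1), of c] cC by metis
  then obtain x :: "nat \<Rightarrow> nat" where xx: "(\<forall>i. 1 \<le> x i) \<and> (\<exists>col\<in>C. \<forall>I. finite I \<longrightarrow> I \<noteq> {} \<longrightarrow> c (sum x I) = col)" ..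
  then have x: "\<forall>i. 1 \<le> x i" by (rule conjunct1)
  from xx have ex: "\<exists>col\<in>C. \<forall>I. finite I \<longrightarrow> I \<noteq> {} \<longrightarrow> c (sum x I) = col" by (rule conjunct2)
  from ex obtain col where col: "col \<in> C"
    and hc: "\<forall>I. finite I \<longrightarrow> I \<noteq> {} \<longrightarrow> c (sum x I) = col" ..
  have AE: "AE xx in bernoulli_measure. \<forall>j. \<exists>i. map xx [i..<i+j] = replicate j a"
    unfolding bernoulli_measure_def using AE_block by (subst AE_all_countable) blast
  define y :: "nat \<Rightarrow> 'a" where "y = (\<lambda>_. a)"
  define V where "V n = replicate (x n) a" for n
  have fac: "is_factorization y V"
    unfolding is_factorization_def
  proof (intro conjI allI)
    show "V n \<noteq> []" for n using x[rule_format, of n] by (simp add: V_def)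
    show "map y [(\<Sum>k<n. length (V k))..<(\<Sum>k<n. length (V k)) + length (V n)] = V n" for n
      by (simp add: y_def V_def map_replicate_const)
  qed
  have um: "ultra_monochromatic \<phi> C V"
    unfolding ultra_monochromatic_def
  proof (intro bexI[OF _ col] allI impI)
    fix k :: nat and n :: "nat \<Rightarrow> nat" and \<sigma>
    assume k: "1 \<le> k" and n: "strict_mono_on {1..k} n" and \<sigma>: "\<sigma> permutes {1..k}"
    have "concat (map (\<lambda>i. V (n (\<sigma> i))) [1..<k+1]) = replicate (sum_list (map (\<lambda>i. x (n (\<sigma> i))) [1..<k+1])) a"
      unfolding V_def by (rule concat_rep)
    also have "sum_list (map (\<lambda>i. x (n (\<sigma> i))) [1..<k+1]) = sum (\<lambda>i. x (n (\<sigma> i))) {1..<k+1}"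
      by (simp only: sum_set_upt_conv_sum_list_nat[symmetric] set_upt)
    also have "\<dots> = sum (\<lambda>i. x (n (\<sigma> i))) {1..k}"
      by (rule sum.cong) auto
    also have "\<dots> = sum (\<lambda>i. x (n i)) {1..k}"
      using sum.permute[OF \<sigma>, of "\<lambda>i. x (n i)"] by (simp add: comp_def)
    also have "\<dots> = sum x (n ` {1..k})"
      using sum.reindex[OF strict_mono_on_imp_inj_on[OF n], of x] by (simp add: comp_def)
    finally have e: "concat (map (\<lambda>i. V (n (\<sigma> i))) [1..<k+1]) = replicate (sum x (n ` {1..k})) a" .
    have "c (sum x (n ` {1..k})) = col" using hc k by auto
    then show "\<phi> (concat (map (\<lambda>i. V (n (\<sigma> i))) [1..<k+1])) = col" unfolding e c_def .
  qed
  show ?thesis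
    using AE
  proof (rule eventually_mono)
    fix xx :: "nat \<Rightarrow> 'a" assume h: "\<forall>j. \<exists>i. map xx [i..<i+j] = replicate j a"
    have "Fact y \<subseteq> Fact xx"
    proof
      fix w assume "w \<in> Fact y"
      then obtain i where w: "w \<noteq> []" "w = map y [i..<i + length w]" by (auto simp: Fact_def)
      have r: "map y [i..<i + length w] = replicate (length w) a" by (simp add: y_def map_replicate_const)
      have wr: "w = replicate (length w) a" by (rule trans[OF w(2) r])
      obtain i' where i': "map xx [i'..<i'+length w] = replicate (length w) a" using h by blast
      have "w = map xx [i'..<i'+length w]" using trans[OF wr i'[symmetric]] .
      then show "w \<in> Fact xx" using w(1) unfolding Fact_def by blast
    qed
    then have "y \<in> Omega xx" by (simp add: Omega_def)
    then show "\<exists>y\<in>Omega xx. \<exists>V. is_factorization y V \<and> ultra_monochromatic \<phi> C V"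
      using fac um by blast
  qed
qed

end
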